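(* In the ladder model, the Markov chain $(\Delta_n)_{n\ge0}$ is ergodic: it has a unique stationary distribution, which has a density $\rho_\infty$, and $\Delta_n$ converges in distribution, as $n\to\infty$, to a non-degenerate random variable $\Delta$ with density $\rho_\infty=\lim_{n\to\infty}\rho_n$, where $\rho_n$ is the density of $\Delta_n$.
   Context: Ladder model $\mathcal{G}^{\{\mathcal{X},\mathcal{Y},\mathcal{Z}\}}$: for $n\ge0$, $G_n$ has vertex set $\{0,\dots,n\}\times\{0,1\}$ and edges: for $1\le i\le n$, an edge with weight $X_i$ joining $(i-1,0)$ and $(i,0)$, an edge with weight $Y_i$ joining $(i-1,1)$ and $(i,1)$; for $0\le i\le n$, an edge with weight $Z_i$ joining $(i,0)$ and $(i,1)$. All weights are independent standard exponential random variables. Path weight = sum of edge weights. $l_n$ ($l_n'$) is the minimal weight of a path in $G_n$ from $(0,0)$ to $(n,0)$ (to $(n,1)$), and $\Delta_n=l_n'-l_n$. $(\Delta_n)$ is a Markov chain with $\Delta_0$ standard exponential and $\Delta_n=\min\{\Delta_{n-1}+Y_n,X_n+Z_n\}-\min\{X_n,\Delta_{n-1}+Y_n+Z_n\}$ for $n\ge1$. *)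

theory Defs
  imports "HOL-Probability.Probability"
begin

text \<open>Edges of the ladder: XE i (i >= 1) bottom rail, YE i (i >= 1) top rail,
  ZE i (i >= 0) rungs.\<close>
datatype edge = XE nat | YE nat | ZE nat

definition ladder_edges :: "edge set" where
  "ladder_edges = {XE i | i. 1 \<le> i} \<union> {YE i | i. 1 \<le> i} \<union> range ZE"

definition ladder_step :: "real \<Rightarrow> real \<Rightarrow> real \<Rightarrow> real \<Rightarrow> real" where
  "ladder_step d x y z = min (d + y) (x + z) - min x (d + y + z)"

text \<open>Delta_n as a random variable built from the edge weights W.
  Delta_0 = l_0' - l_0 = Z_0.\<close>
fun Delta :: "(edge \<Rightarrow> 'a \<Rightarrow> real) \<Rightarrow> nat \<Rightarrow> 'a \<Rightarrow> real" where
  "Delta W 0 \<omega> = W (ZE 0) \<omega>"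
| "Delta W (Suc n) \<omega> =
     ladder_step (Delta W n \<omega>) (W (XE (Suc n)) \<omega>) (W (YE (Suc n)) \<omega>) (W (ZE (Suc n)) \<omega>)"

definition Exp1 :: "real measure" where
  "Exp1 = density lborel (\<lambda>x. ennreal (exponential_density 1 x))"

definition ladder_kernel :: "real \<Rightarrow> real measure" where
  "ladder_kernel d = distr (Exp1 \<Otimes>\<^sub>M (Exp1 \<Otimes>\<^sub>M Exp1)) borel
                        (\<lambda>(x, y, z). ladder_step d x y z)"

definition ladder_stationary :: "real measure \<Rightarrow> bool" where
  "ladder_stationary \<pi> \<longleftrightarrow> prob_space \<pi> \<and> sets \<pi> = sets borel \<and>
     (\<forall>A \<in> sets borel. emeasure \<pi> A = (\<integral>\<^sup>+ d. emeasure (ladder_kernel d) A \<partial>\<pi>))"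

end

theory Submission
  imports Defs
begin



lemma Exp1_prob: "prob_space Exp1"
  unfolding Exp1_def by (rule prob_space_exponential_density) simp

lemma sets_Exp1[simp, measurable_cong]: "sets Exp1 = sets borel"
  unfolding Exp1_def by simp

lemma space_Exp1[simp]: "space Exp1 = UNIV"
  unfolding Exp1_def by simp

lemma emeasure_Exp1: "A \<in> sets borel \<Longrightarrow>
  emeasure Exp1 A = (\<integral>\<^sup>+x. ennreal (exponential_density 1 x) * indicator A x \<partial>lborel)"
  unfolding Exp1_def by (simp add: emeasure_density)

lemma Exp1_null: assumes "A \<in> null_sets lborel" shows "emeasure Exp1 A = 0"
proof -
  have "A \<in> sets borel" using assms by auto
  then show ?thesis using nn_integral_null_set[OF assms] by (simp add: emeasure_Exp1)
qed

lemma Exp1_neg: "emeasure Exp1 {x. x < 0} = 0"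
proof -
  have "emeasure Exp1 {x. x < 0} = (\<integral>\<^sup>+x. ennreal (exponential_density 1 x) * indicator {x. x<0} x \<partial>lborel)"
    by (rule emeasure_Exp1) simp
  also have "\<dots> = (\<integral>\<^sup>+(x::real). 0 \<partial>lborel)"
    by (intro nn_integral_cong) (simp add: exponential_density_def indicator_def)
  finally show ?thesis by simp
qed

lemma Exp1_lower:
  assumes C: "C \<in> sets borel" "C \<subseteq> {0..b}"
  shows "ennreal (exp (-b)) * emeasure lborel C \<le> emeasure Exp1 C"
proof -
  have "ennreal (exp (-b)) * emeasure lborel C = (\<integral>\<^sup>+x. ennreal (exp (-b)) * indicator C x \<partial>lborel)"
    using C by (simp add: nn_integral_cmult_indicator)
  also have "\<dots> \<le> (\<integral>\<^sup>+x. ennreal (exponential_density 1 x) * indicator C x \<partial>lborel)"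
  proof (rule nn_integral_mono)
    fix x show "ennreal (exp (-b)) * indicator C x \<le> ennreal (exponential_density 1 x) * indicator C x"
      using C by (auto simp: indicator_def exponential_density_def intro!: ennreal_leI)
  qed
  also have "\<dots> = emeasure Exp1 C" using C by (simp add: emeasure_Exp1)
  finally show ?thesis .
qed

definition E3 :: "(real \<times> real \<times> real) measure" where
  "E3 = Exp1 \<Otimes>\<^sub>M (Exp1 \<Otimes>\<^sub>M Exp1)"

lemma E3_prob: "prob_space E3"
  unfolding E3_def using Exp1_prob
  by (intro prob_space_pair) (auto intro: prob_space_pair)

lemma sets_E3[measurable_cong]: "sets E3 = sets (borel \<Otimes>\<^sub>M (borel \<Otimes>\<^sub>M borel))"
  unfolding E3_def by (intro sets_pair_measure_cong) (auto intro!: sets_pair_measure_cong)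

lemma space_E3[simp]: "space E3 = UNIV"
  unfolding E3_def by (simp add: space_pair_measure)

lemma step_measurable[measurable]: "(\<lambda>(d, x, y, z). ladder_step d x y z) \<in> borel_measurable (borel \<Otimes>\<^sub>M E3)"
  unfolding ladder_step_def by measurable

lemma kernel_def2: "ladder_kernel d = distr E3 borel (\<lambda>(x, y, z). ladder_step d x y z)"
  unfolding ladder_kernel_def E3_def by simp

lemma sets_kernel[simp, measurable_cong]: "sets (ladder_kernel d) = sets borel"
  by (simp add: kernel_def2)

lemma space_kernel[simp]: "space (ladder_kernel d) = UNIV"
  by (simp add: kernel_def2)

lemma kernel_prob: "prob_space (ladder_kernel d)"
  unfolding kernel_def2 using E3_prob
  by (intro prob_space.prob_space_distr) (auto simp: ladder_step_def)

lemma kernel_measurable[measurable]: "ladder_kernel \<in> measurable borel (subprob_algebra borel)"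
proof -
  have "(\<lambda>d. distr E3 borel (\<lambda>(x, y, z). ladder_step d x y z)) \<in> measurable borel (subprob_algebra borel)"
  proof (rule measurable_distr2[where M=E3 and g="\<lambda>_. E3"])
    show "(\<lambda>(d, v). case v of (x, y, z) \<Rightarrow> ladder_step d x y z) \<in> measurable (borel \<Otimes>\<^sub>M E3) borel"
      using step_measurable by (simp add: case_prod_beta')
    show "(\<lambda>_. E3) \<in> measurable borel (subprob_algebra E3)"
      using E3_prob by (intro measurable_const) (auto simp: space_subprob_algebra prob_space_imp_subprob_space)
  qed
  then show ?thesis by (simp add: kernel_def2[abs_def])
qed




lemma step_abs: "0 \<le> z \<Longrightarrow> \<bar>ladder_step d x y z\<bar> \<le> z"
  unfolding ladder_step_def by (auto simp: min_def)

lemma step_mid: "\<bar>d + y - x\<bar> < z \<Longrightarrow> ladder_step d x y z = d + y - x"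
  unfolding ladder_step_def by (auto simp: min_def)

lemma step_cases: "0 \<le> z \<Longrightarrow> ladder_step d x y z = z \<or> ladder_step d x y z = - z \<or> ladder_step d x y z = d + y - x"
  unfolding ladder_step_def by (auto simp: min_def)

lemma sf_Exp1: "sigma_finite_measure Exp1"
  using Exp1_prob by (simp add: prob_space_imp_sigma_finite)

lemma sf_Exp2: "sigma_finite_measure (Exp1 \<Otimes>\<^sub>M Exp1)"
  using Exp1_prob by (intro prob_space_imp_sigma_finite prob_space_pair)

lemma E3_alt: "X \<in> sets E3 \<Longrightarrow> emeasure E3 X = (\<integral>\<^sup>+x. emeasure (Exp1 \<Otimes>\<^sub>M Exp1) (Pair x -` X) \<partial>Exp1)"
  unfolding E3_def by (rule sigma_finite_measure.emeasure_pair_measure_alt[OF sf_Exp2]) (simp add: E3_def)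

lemma E2_Times: "A \<in> sets borel \<Longrightarrow> B \<in> sets borel \<Longrightarrow> emeasure (Exp1 \<Otimes>\<^sub>M Exp1) (A \<times> B) = emeasure Exp1 A * emeasure Exp1 B"
  by (rule sigma_finite_measure.emeasure_pair_measure_Times[OF sf_Exp1]) auto

lemma E3_z: assumes "C \<in> sets borel" shows "emeasure E3 (UNIV \<times> UNIV \<times> C) = emeasure Exp1 C"
proof -
  have "emeasure E3 (UNIV \<times> UNIV \<times> C) = emeasure Exp1 UNIV * emeasure (Exp1 \<Otimes>\<^sub>M Exp1) (UNIV \<times> C)"
    unfolding E3_def using assms by (intro sigma_finite_measure.emeasure_pair_measure_Times[OF sf_Exp2]) auto
  also have "\<dots> = emeasure Exp1 C" using assms Exp1_prob
    by (simp add: E2_Times prob_space.emeasure_space_1[of Exp1, simplified])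
  finally show ?thesis .
qed

lemma kernel_emeasure: "A \<in> sets borel \<Longrightarrow>
   emeasure (ladder_kernel d) A = emeasure E3 {(x, y, z). ladder_step d x y z \<in> A}"
  unfolding kernel_def2
  by (subst emeasure_distr) (auto simp: ladder_step_def intro!: arg_cong[where f="emeasure E3"])

lemma step_meas_d[measurable]: "(\<lambda>(x, y, z). ladder_step d x y z) \<in> borel_measurable E3"
  by (simp add: ladder_step_def measurable_cong_sets[OF sets_E3 refl] case_prod_beta')

lemma kernel_Icc: "ennreal (exp (-1)) \<le> emeasure (ladder_kernel d) {-1..1}"
proof -
  have "ennreal (exp (-1)) = ennreal (exp (-1)) * emeasure lborel {0..1::real}" by simp
  also have "\<dots> \<le> emeasure Exp1 {0..1}" by (rule Exp1_lower) auto
  also have "\<dots> = emeasure E3 (UNIV \<times> UNIV \<times> {0..1})" by (simp add: E3_z)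
  also have "\<dots> \<le> emeasure E3 {(x, y, z). ladder_step d x y z \<in> {-1..1}}"
  proof (rule emeasure_mono)
    show "UNIV \<times> UNIV \<times> {0..1} \<subseteq> {(x, y, z). ladder_step d x y z \<in> {- 1..1}}"
    proof (safe)
      fix x y z :: real assume "z \<in> {0..1}"
      then have "\<bar>ladder_step d x y z\<bar> \<le> 1" using step_abs[of z d x y] by auto
      then show "ladder_step d x y z \<in> {-1..1}" by auto
    qed
    have "{(x, y, z). ladder_step d x y z \<in> {- 1..1}} = (\<lambda>(x, y, z). ladder_step d x y z) -` {-1..1} \<inter> space E3"
      by auto
    then show "{(x, y, z). ladder_step d x y z \<in> {- 1..1}} \<in> sets E3"
      using step_meas_d by (metis measurable_sets sets_lborel borel_closed closed_atLeastAtMost)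
  qed
  also have "\<dots> = emeasure (ladder_kernel d) {-1..1}" by (simp add: kernel_emeasure)
  finally show ?thesis .
qed




lemma lborel_transl: "A \<in> sets borel \<Longrightarrow> emeasure lborel {y::real. c + y \<in> A} = emeasure lborel A"
proof -
  assume A: "A \<in> sets borel"
  have "emeasure lborel A = emeasure (distr lborel borel ((+) c)) A" by (simp add: lborel_distr_plus)
  also have "\<dots> = emeasure lborel ((+) c -` A \<inter> space lborel)" using A by (subst emeasure_distr) auto
  finally show ?thesis by (simp add: vimage_def)
qed

lemma lborel_neg: "A \<in> sets borel \<Longrightarrow> emeasure lborel {y::real. - y \<in> A} = emeasure lborel A"
proof -
  assume A: "A \<in> sets borel"
  have "emeasure lborel A = emeasure (distr lborel borel uminus) A" by (simp add: lborel_distr_uminus)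
  also have "\<dots> = emeasure lborel (uminus -` A \<inter> space lborel)" using A by (subst emeasure_distr) auto
  finally show ?thesis by (simp add: vimage_def)
qed

lemma E3_sets_pred: assumes "(\<lambda>(x,y,z). f x y z) \<in> borel_measurable E3" "A \<in> sets borel"
  shows "{(x, y, z). f x y z \<in> A} \<in> sets E3"
proof -
  have "{(x, y, z). f x y z \<in> A} = (\<lambda>(x,y,z). f x y z) -` A \<inter> space E3" by auto
  then show ?thesis using measurable_sets[OF assms(1)] assms(2) by simp
qed

lemma E3_zset: "C \<in> null_sets Exp1 \<Longrightarrow> UNIV \<times> UNIV \<times> C \<in> null_sets E3"
  using E3_z[of C] by (auto simp: null_sets_def E3_def)

lemma kernel_ac: assumes A: "A \<in> null_sets lborel" shows "emeasure (ladder_kernel d) A = 0"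
proof -
  have Ab: "A \<in> sets borel" using A by auto
  let ?S = "{(x, y, z). ladder_step d x y z \<in> A}"
  let ?S3 = "{(x, y, z::real). d + y - x \<in> A}"
  have S: "?S \<in> sets E3" by (rule E3_sets_pred[OF step_meas_d Ab])
  have S3s: "?S3 \<in> sets E3" by (rule E3_sets_pred[OF _ Ab]) (simp add: measurable_cong_sets[OF sets_E3 refl] case_prod_beta')
  have n1: "UNIV \<times> UNIV \<times> A \<in> null_sets E3"
    using Exp1_null[OF A] Ab by (intro E3_zset) auto
  have "{y. - y \<in> A} \<in> null_sets lborel"
    using lborel_neg[OF Ab] A Ab by (auto simp: null_sets_def)
  then have n2: "UNIV \<times> UNIV \<times> {y. - y \<in> A} \<in> null_sets E3"
    using Exp1_null by (intro E3_zset) (auto simp: null_sets_def)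
  have n4: "UNIV \<times> UNIV \<times> {z. z < 0} \<in> null_sets E3"
    using Exp1_neg by (intro E3_zset) (auto simp: null_sets_def)
  have "emeasure E3 ?S3 = (\<integral>\<^sup>+x. emeasure (Exp1 \<Otimes>\<^sub>M Exp1) (Pair x -` ?S3) \<partial>Exp1)"
    by (rule E3_alt[OF S3s])
  also have "\<dots> = (\<integral>\<^sup>+x. 0 \<partial>Exp1)"
  proof (rule nn_integral_cong)
    fix x
    have eq: "Pair x -` ?S3 = {y. (d - x) + y \<in> A} \<times> UNIV" by (auto simp: algebra_simps)
    have ms: "{y. (d - x) + y \<in> A} \<in> sets borel"
      using measurable_sets[of "\<lambda>y. (d - x) + y" borel borel A] Ab by (simp add: vimage_def)
    have "{y. (d - x) + y \<in> A} \<in> null_sets lborel"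
      using lborel_transl[OF Ab, of "d - x"] A ms by (auto simp: null_sets_def)
    then have "emeasure Exp1 {y. (d - x) + y \<in> A} = 0" by (rule Exp1_null)
    then show "emeasure (Exp1 \<Otimes>\<^sub>M Exp1) (Pair x -` ?S3) = 0"
      unfolding eq using ms by (simp add: E2_Times)
  qed
  finally have n3: "?S3 \<in> null_sets E3" using S3s by (auto simp: null_sets_def)
  have sub: "?S \<subseteq> (UNIV \<times> UNIV \<times> A) \<union> (UNIV \<times> UNIV \<times> {y. - y \<in> A}) \<union> ?S3 \<union> (UNIV \<times> UNIV \<times> {z. z < 0})"
  proof
    fix v assume "v \<in> ?S"
    then obtain x y z where v: "v = (x,y,z)" "ladder_step d x y z \<in> A" by auto
    then show "v \<in> (UNIV \<times> UNIV \<times> A) \<union> (UNIV \<times> UNIV \<times> {y. - y \<in> A}) \<union> ?S3 \<union> (UNIV \<times> UNIV \<times> {z. z < 0})"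
      using step_cases[of z d x y] by (cases "z < 0") auto
  qed
  have "?S \<in> null_sets E3"
    by (rule null_sets_subset[OF _ S sub]) (intro null_sets.Un n1 n2 n3 n4)
  then show ?thesis by (simp add: kernel_emeasure[OF Ab] null_sets_def)
qed

lemma kernel_lower:
  assumes d: "\<bar>d\<bar> \<le> 1" and B: "B \<in> sets borel" "B \<subseteq> {-1..1}"
  shows "ennreal (exp (-11)) * emeasure lborel B \<le> emeasure (ladder_kernel d) B"
proof -
  let ?S = "{(x, y, z). ladder_step d x y z \<in> B}"
  let ?T = "{(x, y, z::real). x \<in> {2..3} \<and> z \<in> {2..3} \<and> d + y - x \<in> B}"
  have S: "?S \<in> sets E3" by (rule E3_sets_pred[OF step_meas_d B(1)])
  have Ts: "?T \<in> sets E3"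
  proof -
    have "?T = ({2..3} \<times> UNIV \<times> {2..3}) \<inter> {(x, y, z::real). d + y - x \<in> B}" by auto
    moreover have "{(x, y, z::real). d + y - x \<in> B} \<in> sets E3"
      by (rule E3_sets_pred[OF _ B(1)]) (simp add: measurable_cong_sets[OF sets_E3 refl] case_prod_beta')
    moreover have "{2..3} \<times> UNIV \<times> {2..3::real} \<in> sets E3" by (simp add: E3_def)
    ultimately show ?thesis by simp
  qed
  have TS: "?T \<subseteq> ?S"
  proof safe
    fix x y z :: real assume "x \<in> {2..3}" "z \<in> {2..3}" "d + y - x \<in> B"
    moreover then have "\<bar>d + y - x\<bar> < z" using B by force
    ultimately show "ladder_step d x y z \<in> B" by (simp add: step_mid)
  qed
  let ?c = "ennreal (exp (-5)) * emeasure lborel B * ennreal (exp (-3))"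
  have e11: "ennreal (exp (-11)) = ennreal (exp (-3)) * ennreal (exp (-5)) * ennreal (exp (-3))"
    by (simp add: exp_add[symmetric] flip: ennreal_mult)
  have "ennreal (exp (-11)) * emeasure lborel B = ennreal (exp (-3)) * ?c"
    unfolding e11 by (simp add: mult_ac)
  also have "\<dots> = ennreal (exp (-3)) * emeasure lborel {2..3::real} * ?c" by simp
  also have "\<dots> \<le> emeasure Exp1 {2..3} * ?c"
    by (intro mult_right_mono Exp1_lower) auto
  also have "\<dots> = (\<integral>\<^sup>+x. ?c * indicator {2..3} x \<partial>Exp1)"
    using nn_integral_cmult_indicator[of "{2..3}" Exp1 ?c] by (simp add: mult.commute)
  also have "\<dots> \<le> (\<integral>\<^sup>+x. emeasure (Exp1 \<Otimes>\<^sub>M Exp1) (Pair x -` ?T) \<partial>Exp1)"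
  proof (rule nn_integral_mono)
    fix x
    show "?c * indicator {2..3} x \<le> emeasure (Exp1 \<Otimes>\<^sub>M Exp1) (Pair x -` ?T)"
    proof (cases "x \<in> {2..3}")
      case True
      have ms: "{y. (d - x) + y \<in> B} \<in> sets borel"
        using measurable_sets[of "\<lambda>y. (d - x) + y" borel borel B] B by (simp add: vimage_def)
      have eq: "Pair x -` ?T = {y. (d - x) + y \<in> B} \<times> {2..3}" using True by (auto simp: algebra_simps)
      have "?c = ennreal (exp (-5)) * emeasure lborel {y. (d - x) + y \<in> B} * (ennreal (exp (-3)) * emeasure lborel {2..3::real})"
        by (simp add: lborel_transl[OF B(1)])
      also have "\<dots> \<le> emeasure Exp1 {y. (d - x) + y \<in> B} * emeasure Exp1 {2..3}"
      proof (intro mult_mono Exp1_lower)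
        show "{y. d - x + y \<in> B} \<subseteq> {0..5}"
        proof
          fix y assume "y \<in> {y. d - x + y \<in> B}"
          then have "d - x + y \<in> {-1..1}" using B by auto
          then show "y \<in> {0..5}" using True d by auto
        qed
      qed (use ms in auto)
      also have "\<dots> = emeasure (Exp1 \<Otimes>\<^sub>M Exp1) (Pair x -` ?T)"
        unfolding eq using ms by (simp add: E2_Times)
      finally show ?thesis using True by simp
    qed simp
  qed
  also have "\<dots> = emeasure E3 ?T" by (rule E3_alt[OF Ts, symmetric])
  also have "\<dots> \<le> emeasure E3 ?S" by (rule emeasure_mono[OF TS S])
  also have "\<dots> = emeasure (ladder_kernel d) B" by (simp add: kernel_emeasure[OF B(1)])
  finally show ?thesis .
qed




lemma int_mult_bdd:
  fixes f g :: "'a \<Rightarrow> real"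
  assumes f: "integrable M f" and g: "g \<in> borel_measurable M" and b: "\<And>x. \<bar>g x\<bar> \<le> 1"
  shows "integrable M (\<lambda>x. f x * g x)"
proof (rule Bochner_Integration.integrable_bound[OF f])
  show "(\<lambda>x. f x * g x) \<in> borel_measurable M" using f g by (intro borel_measurable_times) auto
  show "AE x in M. norm (f x * g x) \<le> norm (f x)"
    using b by (auto simp: abs_mult intro!: mult_left_le)
qed

lemma aux_abs: assumes "0 \<le> a" "0 \<le> b" shows "(h::real) * (a - b) \<le> \<bar>h\<bar> * (a + b)"
proof -
  have "h * (a - b) \<le> \<bar>h * (a - b)\<bar>" by (rule abs_ge_self)
  also have "\<dots> = \<bar>h\<bar> * \<bar>a - b\<bar>" by (simp add: abs_mult)
  also have "\<dots> \<le> \<bar>h\<bar> * (a + b)" using assms by (intro mult_left_mono) auto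
  finally show ?thesis .
qed

lemma contraction:
  fixes f g p q :: "real \<Rightarrow> real" and Q :: "real \<Rightarrow> real set \<Rightarrow> real" and \<nu> :: "real set \<Rightarrow> real"
  assumes f: "integrable lborel f" and g: "integrable lborel g"
    and p: "integrable lborel p" and q: "integrable lborel q"
    and fg: "(\<integral>x. f x \<partial>lborel) = (\<integral>x. g x \<partial>lborel)"
    and Qm: "\<And>A. A \<in> sets borel \<Longrightarrow> (\<lambda>d. Q d A) \<in> borel_measurable borel"
    and Q0: "\<And>d A. A \<in> sets borel \<Longrightarrow> \<epsilon> * \<nu> A \<le> Q d A"
    and Q1: "\<And>d A. A \<in> sets borel \<Longrightarrow> Q d A + Q d (- A) = 1"
    and \<nu>1: "\<And>A. A \<in> sets borel \<Longrightarrow> \<nu> A + \<nu> (- A) = 2"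
    and \<nu>0: "\<And>A. A \<in> sets borel \<Longrightarrow> 0 \<le> \<nu> A" and eps: "0 \<le> \<epsilon>"
    and hp: "\<And>A. A \<in> sets borel \<Longrightarrow> (\<integral>x. p x * indicator A x \<partial>lborel) = (\<integral>d. f d * Q d A \<partial>lborel)"
    and hq: "\<And>A. A \<in> sets borel \<Longrightarrow> (\<integral>x. q x * indicator A x \<partial>lborel) = (\<integral>d. g d * Q d A \<partial>lborel)"
  shows "(\<integral>x. \<bar>p x - q x\<bar> \<partial>lborel) \<le> (1 - 2 * \<epsilon>) * (\<integral>x. \<bar>f x - g x\<bar> \<partial>lborel)"
proof -
  have [measurable]: "p \<in> borel_measurable borel" "q \<in> borel_measurable borel"
    using p q by (auto dest: borel_measurable_integrable)
  define A where "A = {x. q x \<le> p x}"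
  have A: "A \<in> sets borel" "- A \<in> sets borel" unfolding A_def by measurable
  define h where "h d = f d - g d" for d
  have h: "integrable lborel h" unfolding h_def using f g by auto
  have h0: "(\<integral>d. h d \<partial>lborel) = 0" unfolding h_def using f g fg by simp
  have Qb: "\<And>d B. B \<in> sets borel \<Longrightarrow> \<bar>Q d B\<bar> \<le> 1"
  proof -
    fix d and B :: "real set" assume B: "B \<in> sets borel"
    then have "- B \<in> sets borel" by auto
    have "0 \<le> \<epsilon> * \<nu> B" "0 \<le> \<epsilon> * \<nu> (- B)" using eps \<nu>0 B \<open>- B \<in> sets borel\<close> by auto
    then show "\<bar>Q d B\<bar> \<le> 1" using Q0[OF B, of d] Q0[OF \<open>- B \<in> sets borel\<close>, of d] Q1[OF B, of d] by auto
  qed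
  have iQ: "\<And>(k::real\<Rightarrow>real) (B :: real set). integrable lborel k \<Longrightarrow> B \<in> sets borel \<Longrightarrow> integrable lborel (\<lambda>d. k d * Q d B)"
    using Qb Qm by (intro int_mult_bdd) auto
  have ipA: "\<And>(k::real\<Rightarrow>real) (B :: real set). integrable lborel k \<Longrightarrow> B \<in> sets borel \<Longrightarrow> integrable lborel (\<lambda>x. k x * indicator B x)"
    using integrable_real_mult_indicator[of _ lborel] by simp
  have "(\<integral>x. \<bar>p x - q x\<bar> \<partial>lborel) =
      (\<integral>x. (p x * indicator A x - q x * indicator A x) + (q x * indicator (- A) x - p x * indicator (- A) x) \<partial>lborel)"
    by (intro Bochner_Integration.integral_cong) (auto simp: A_def indicator_def)
  also have "\<dots> = ((\<integral>x. p x * indicator A x \<partial>lborel) - (\<integral>x. q x * indicator A x \<partial>lborel))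
       + ((\<integral>x. q x * indicator (- A) x \<partial>lborel) - (\<integral>x. p x * indicator (- A) x \<partial>lborel))"
    using ipA[OF p A(1)] ipA[OF q A(1)] ipA[OF p A(2)] ipA[OF q A(2)] by simp
  also have "\<dots> = ((\<integral>d. f d * Q d A \<partial>lborel) - (\<integral>d. g d * Q d A \<partial>lborel))
       + ((\<integral>d. g d * Q d (- A) \<partial>lborel) - (\<integral>d. f d * Q d (- A) \<partial>lborel))"
    using A by (simp add: hp hq)
  also have "\<dots> = (\<integral>d. h d * (Q d A - Q d (- A)) \<partial>lborel)"
    using iQ[OF f A(1)] iQ[OF g A(1)] iQ[OF f A(2)] iQ[OF g A(2)]
    by (simp add: h_def algebra_simps)
  also have "\<dots> = (\<integral>d. h d * ((Q d A - \<epsilon> * \<nu> A) - (Q d (- A) - \<epsilon> * \<nu> (- A))) + (\<epsilon> * (\<nu> A - \<nu> (- A))) * h d \<partial>lborel)"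
    by (intro Bochner_Integration.integral_cong) (auto simp: algebra_simps)
  also have "\<dots> = (\<integral>d. h d * ((Q d A - \<epsilon> * \<nu> A) - (Q d (- A) - \<epsilon> * \<nu> (- A))) \<partial>lborel)"
  proof -
    have "integrable lborel (\<lambda>d. h d * ((Q d A - \<epsilon> * \<nu> A) - (Q d (- A) - \<epsilon> * \<nu> (- A))))"
      using iQ[OF h A(1)] iQ[OF h A(2)] h by (simp add: algebra_simps)
    then show ?thesis using h h0 by simp
  qed
  also have "\<dots> \<le> (\<integral>d. \<bar>h d\<bar> * (1 - 2 * \<epsilon>) \<partial>lborel)"
  proof (rule Bochner_Integration.integral_mono)
    show "integrable lborel (\<lambda>d. h d * ((Q d A - \<epsilon> * \<nu> A) - (Q d (- A) - \<epsilon> * \<nu> (- A))))"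
      using iQ[OF h A(1)] iQ[OF h A(2)] h by (simp add: algebra_simps)
    show "integrable lborel (\<lambda>d. \<bar>h d\<bar> * (1 - 2 * \<epsilon>))" using h by simp
    fix d
    have a: "0 \<le> Q d A - \<epsilon> * \<nu> A" and b: "0 \<le> Q d (- A) - \<epsilon> * \<nu> (- A)" using Q0 A by auto
    have "h d * ((Q d A - \<epsilon> * \<nu> A) - (Q d (- A) - \<epsilon> * \<nu> (- A))) \<le> \<bar>h d\<bar> * ((Q d A - \<epsilon> * \<nu> A) + (Q d (- A) - \<epsilon> * \<nu> (- A)))"
      using a b by (rule aux_abs)
    also have "\<dots> = \<bar>h d\<bar> * (1 - 2 * \<epsilon>)"
    proof -
      have "(Q d A - \<epsilon> * \<nu> A) + (Q d (- A) - \<epsilon> * \<nu> (- A)) = (Q d A + Q d (- A)) - \<epsilon> * (\<nu> A + \<nu> (- A))"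
        by (simp add: algebra_simps)
      also have "\<dots> = 1 - 2 * \<epsilon>" using Q1[OF A(1), of d] \<nu>1[OF A(1)] by simp
      finally show ?thesis by simp
    qed
    finally show "h d * ((Q d A - \<epsilon> * \<nu> A) - (Q d (- A) - \<epsilon> * \<nu> (- A))) \<le> \<bar>h d\<bar> * (1 - 2 * \<epsilon>)" .
  qed
  also have "\<dots> = (1 - 2 * \<epsilon>) * (\<integral>x. \<bar>f x - g x\<bar> \<partial>lborel)"
    by (simp add: h_def mult.commute)
  finally show ?thesis .
qed




abbreviation "K \<equiv> ladder_kernel"

lemma space_borelset: "sets P = sets (borel::real measure) \<Longrightarrow> space P = UNIV"
  using sets_eq_imp_space_eq by fastforce

lemma kmeasP: "sets P = sets borel \<Longrightarrow> K \<in> measurable P (subprob_algebra borel)"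
  using kernel_measurable measurable_cong_sets by blast

lemma sets_bindK[simp]: "sets P = sets borel \<Longrightarrow> sets (P \<bind> K) = sets borel"
  by (rule sets_bind) (auto simp: space_borelset)

lemma bindK_emeasure: "sets P = sets borel \<Longrightarrow> A \<in> sets borel \<Longrightarrow>
   emeasure (P \<bind> K) A = (\<integral>\<^sup>+d. emeasure (K d) A \<partial>P)"
  by (rule emeasure_bind[OF _ kmeasP]) (auto simp: space_borelset)

lemma prob_bindK: "prob_space P \<Longrightarrow> sets P = sets borel \<Longrightarrow> prob_space (P \<bind> K)"
  by (rule prob_space.prob_space_bind[OF _ _ kmeasP]) (auto simp: kernel_prob)

definition K2 :: "real \<Rightarrow> real measure" where "K2 d = K d \<bind> K"

lemma sets_K2[simp, measurable_cong]: "sets (K2 d) = sets borel"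
  unfolding K2_def by simp

lemma space_K2[simp]: "space (K2 d) = UNIV"
  using sets_K2 space_borelset by blast

lemma prob_K2: "prob_space (K2 d)"
  unfolding K2_def by (rule prob_bindK[OF kernel_prob]) simp

lemma K2_measurable[measurable]: "K2 \<in> measurable borel (subprob_algebra borel)"
  unfolding K2_def[abs_def] by (rule measurable_bind2[OF kernel_measurable kernel_measurable])

lemma bind_K2: "sets P = sets borel \<Longrightarrow> P \<bind> K \<bind> K = P \<bind> K2"
  unfolding K2_def by (rule bind_assoc[OF kmeasP kernel_measurable])

lemma K2_lower: assumes B: "B \<in> sets borel"
  shows "ennreal (exp (-12)) * emeasure lborel (B \<inter> {-1..1}) \<le> emeasure (K2 d) B"
proof -
  let ?c = "ennreal (exp (-11)) * emeasure lborel (B \<inter> {-1..1})"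
  have "ennreal (exp (-12)) * emeasure lborel (B \<inter> {-1..1}) = ennreal (exp (-1)) * ?c"
  proof -
    have e12: "ennreal (exp (-12)) = ennreal (exp (-1)) * ennreal (exp (-11))"
      by (simp add: exp_add[symmetric] flip: ennreal_mult)
    show ?thesis unfolding e12 by (simp add: mult.assoc)
  qed
  also have "\<dots> \<le> emeasure (K d) {-1..1} * ?c"
    by (intro mult_right_mono kernel_Icc) simp
  also have "\<dots> = (\<integral>\<^sup>+e. ?c * indicator {-1..1} e \<partial>K d)"
    using nn_integral_cmult_indicator[of "{-1..1}" "K d" ?c] by (simp add: mult.commute)
  also have "\<dots> \<le> (\<integral>\<^sup>+e. emeasure (K e) B \<partial>K d)"
  proof (rule nn_integral_mono)
    fix e :: real
    show "?c * indicator {-1..1} e \<le> emeasure (K e) B"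
    proof (cases "e \<in> {-1..1}")
      case True
      then have "?c \<le> emeasure (K e) (B \<inter> {-1..1})"
        using B by (intro kernel_lower) auto
      also have "\<dots> \<le> emeasure (K e) B" using B by (intro emeasure_mono) auto
      finally show ?thesis using True by simp
    qed simp
  qed
  also have "\<dots> = emeasure (K2 d) B" unfolding K2_def using B by (simp add: bindK_emeasure)
  finally show ?thesis .
qed

lemma ac_bindK: assumes "sets P = sets borel" shows "absolutely_continuous lborel (P \<bind> K)"
  unfolding absolutely_continuous_def
proof
  fix A :: "real set" assume A: "A \<in> null_sets lborel"
  then have Ab: "A \<in> sets borel" by auto
  have "emeasure (P \<bind> K) A = (\<integral>\<^sup>+d. emeasure (K d) A \<partial>P)" using assms Ab by (simp add: bindK_emeasure)
  also have "\<dots> = 0" using kernel_ac[OF A] by simp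
  finally show "A \<in> null_sets (P \<bind> K)" using assms Ab by (auto simp: null_sets_def)
qed

lemma dens_exists:
  assumes N: "prob_space N" "sets N = sets borel" and ac: "absolutely_continuous lborel N"
  shows "\<exists>f. f \<in> borel_measurable borel \<and> (\<forall>x. 0 \<le> f x) \<and> N = density lborel (\<lambda>x. ennreal (f x))"
proof -
  have sf: "sigma_finite_measure N" using N(1) by (rule prob_space_imp_sigma_finite)
  have eq: "density lborel (RN_deriv lborel N) = N"
    using sigma_finite_measure.density_RN_deriv[OF sigma_finite_lborel ac] N(2) by simp
  have fin: "AE x in lborel. RN_deriv lborel N x \<noteq> \<infinity>"
    using sigma_finite_measure.RN_deriv_finite[OF sigma_finite_lborel sf ac] N(2) by simp
  let ?f = "\<lambda>x. enn2real (RN_deriv lborel N x)"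
  have "density lborel (\<lambda>x. ennreal (?f x)) = density lborel (RN_deriv lborel N)"
    by (rule density_cong) (use fin in \<open>auto simp: less_top\<close>)
  then show ?thesis using eq by (intro exI[of _ ?f]) auto
qed

lemma dens_prob:
  assumes f: "f \<in> borel_measurable borel" "\<And>x. 0 \<le> f x" and P: "prob_space (density lborel (\<lambda>x. ennreal (f x)))"
  shows "integrable lborel f" "(\<integral>x. f x \<partial>lborel) = 1"
proof -
  have "(\<integral>\<^sup>+x. ennreal (f x) \<partial>lborel) = emeasure (density lborel (\<lambda>x. ennreal (f x))) UNIV"
    using f by (simp add: emeasure_density)
  also have "\<dots> = 1" using prob_space.emeasure_space_1[OF P] by simp
  finally have 1: "(\<integral>\<^sup>+x. ennreal (f x) \<partial>lborel) = 1" .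
  show i: "integrable lborel f" using f 1 by (intro integrableI_nonneg) auto
  have "ennreal (\<integral>x. f x \<partial>lborel) = 1" using nn_integral_eq_integral[OF i] f 1 by simp
  then show "(\<integral>x. f x \<partial>lborel) = 1" using f by (simp add: integral_nonneg_AE)
qed

definition Q2 :: "real \<Rightarrow> real set \<Rightarrow> real" where "Q2 d A = measure (K2 d) A"

lemma Q2_meas: "A \<in> sets borel \<Longrightarrow> (\<lambda>d. Q2 d A) \<in> borel_measurable borel"
  unfolding Q2_def by (rule measurable_compose[OF K2_measurable measurable_measure_subprob_algebra])

lemma emeasure_K2: "emeasure (K2 d) A = ennreal (Q2 d A)"
  unfolding Q2_def using finite_measure.emeasure_eq_measure[OF prob_space.finite_measure[OF prob_K2]] by simp

lemma Q2_compl: "A \<in> sets borel \<Longrightarrow> Q2 d A + Q2 d (- A) = 1"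
  unfolding Q2_def using prob_space.prob_compl[OF prob_K2, of A d] by (simp add: Compl_eq_Diff_UNIV)

definition \<nu>1 :: "real set \<Rightarrow> real" where "\<nu>1 A = measure lborel (A \<inter> {-1..1})"

lemma \<nu>1_compl: "A \<in> sets borel \<Longrightarrow> \<nu>1 A + \<nu>1 (- A) = 2"
proof -
  assume A: "A \<in> sets borel"
  have f: "emeasure lborel (S \<inter> {-1..1::real}) \<noteq> \<infinity>" for S
  proof -
    have "emeasure lborel (S \<inter> {-1..1::real}) \<le> emeasure lborel {-1..1::real}" by (rule emeasure_mono) auto
    then show ?thesis by (auto simp: top_unique)
  qed
  have "measure lborel ((A \<inter> {-1..1}) \<union> (- A \<inter> {-1..1})) = \<nu>1 A + \<nu>1 (- A)"
    unfolding \<nu>1_def using A by (intro measure_Union f) auto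
  moreover have "(A \<inter> {-1..1}) \<union> (- A \<inter> {-1..1}) = {-1..1::real}" by auto
  ultimately show ?thesis by simp
qed

lemma Q2_lower: "A \<in> sets borel \<Longrightarrow> exp (-12) * \<nu>1 A \<le> Q2 d A"
proof -
  assume A: "A \<in> sets borel"
  have fin: "emeasure lborel (A \<inter> {-1..1::real}) \<noteq> top"
  proof -
    have "emeasure lborel (A \<inter> {-1..1::real}) \<le> emeasure lborel {-1..1::real}" by (rule emeasure_mono) auto
    then show ?thesis by (auto simp: top_unique)
  qed
  have "ennreal (exp (-12) * \<nu>1 A) = ennreal (exp (-12)) * emeasure lborel (A \<inter> {-1..1})"
    unfolding \<nu>1_def using emeasure_eq_ennreal_measure[OF fin] by (simp add: ennreal_mult)
  also have "\<dots> \<le> ennreal (Q2 d A)" using K2_lower[OF A, of d] by (simp add: emeasure_K2)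
  finally show ?thesis by (subst (asm) ennreal_le_iff) (auto simp: Q2_def)
qed




lemma meas_density:
  assumes p: "p \<in> borel_measurable borel" "\<And>x. 0 \<le> p x" "integrable lborel p" and A: "A \<in> sets borel"
  shows "measure (density lborel (\<lambda>x. ennreal (p x))) A = (\<integral>x. p x * indicator A x \<partial>lborel)"
proof -
  have i: "integrable lborel (\<lambda>x. p x * indicator A x)"
    using integrable_real_mult_indicator[of A lborel p] p A by simp
  have "emeasure (density lborel (\<lambda>x. ennreal (p x))) A = (\<integral>\<^sup>+x. ennreal (p x) * indicator A x \<partial>lborel)"
    using p A by (simp add: emeasure_density)
  also have "\<dots> = (\<integral>\<^sup>+x. ennreal (p x * indicator A x) \<partial>lborel)"
    by (intro nn_integral_cong) (auto simp: indicator_def)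
  also have "\<dots> = ennreal (\<integral>x. p x * indicator A x \<partial>lborel)"
    using i p by (intro nn_integral_eq_integral) auto
  finally show ?thesis using p by (simp add: measure_def integral_nonneg_AE)
qed

lemma bind_dens_integral:
  assumes L: "L \<in> measurable borel (subprob_algebra borel)" "\<And>d. prob_space (L d)"
    and f: "f \<in> borel_measurable borel" "\<And>x. 0 \<le> f x" "integrable lborel f" and A: "A \<in> sets borel"
  shows "measure (density lborel (\<lambda>x. ennreal (f x)) \<bind> L) A = (\<integral>d. f d * measure (L d) A \<partial>lborel)"
    "integrable lborel (\<lambda>d. f d * measure (L d) A)"
proof -
  have mL: "(\<lambda>d. measure (L d) A) \<in> borel_measurable borel"
    by (rule measurable_compose[OF L(1) measurable_measure_subprob_algebra]) (use A in simp)
  show i: "integrable lborel (\<lambda>d. f d * measure (L d) A)"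
    using mL by (intro int_mult_bdd f) (auto intro!: prob_space.prob_le_1[OF L(2)] simp: measure_nonneg)
  have L': "L \<in> measurable (density lborel (\<lambda>x. ennreal (f x))) (subprob_algebra borel)"
    using L(1) measurable_cong_sets by (metis sets_density sets_lborel)
  have "emeasure (density lborel (\<lambda>x. ennreal (f x)) \<bind> L) A = (\<integral>\<^sup>+d. emeasure (L d) A \<partial>density lborel (\<lambda>x. ennreal (f x)))"
    by (rule emeasure_bind[OF _ L' ]) (use A in auto)
  also have "\<dots> = (\<integral>\<^sup>+d. ennreal (f d) * emeasure (L d) A \<partial>lborel)"
    using f A by (intro nn_integral_density) (auto intro!: measurable_compose[OF L(1) measurable_emeasure_subprob_algebra])
  also have "\<dots> = (\<integral>\<^sup>+d. ennreal (f d * measure (L d) A) \<partial>lborel)"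
    by (intro nn_integral_cong)
       (simp add: finite_measure.emeasure_eq_measure[OF prob_space.finite_measure[OF L(2)]] ennreal_mult f(2))
  also have "\<dots> = ennreal (\<integral>d. f d * measure (L d) A \<partial>lborel)"
    using i f by (intro nn_integral_eq_integral) auto
  finally show "measure (density lborel (\<lambda>x. ennreal (f x)) \<bind> L) A = (\<integral>d. f d * measure (L d) A \<partial>lborel)"
    using f by (simp add: measure_def integral_nonneg_AE)
qed

lemma diff_bound:
  fixes p q k :: "real \<Rightarrow> real"
  assumes p: "integrable lborel p" and q: "integrable lborel q" and k: "k \<in> borel_measurable borel" "\<And>x. \<bar>k x\<bar> \<le> 1"
  shows "\<bar>(\<integral>x. p x * k x \<partial>lborel) - (\<integral>x. q x * k x \<partial>lborel)\<bar> \<le> (\<integral>x. \<bar>p x - q x\<bar> \<partial>lborel)"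
proof -
  have kl: "k \<in> borel_measurable lborel" using k(1) by simp
  have "(\<integral>x. p x * k x \<partial>lborel) - (\<integral>x. q x * k x \<partial>lborel) = (\<integral>x. (p x - q x) * k x \<partial>lborel)"
    using int_mult_bdd[OF p kl k(2)] int_mult_bdd[OF q kl k(2)] by (simp add: left_diff_distrib)
  also have "\<bar>\<dots>\<bar> \<le> (\<integral>x. \<bar>p x - q x\<bar> \<partial>lborel)"
  proof (rule integral_abs_bound_integral)
    show "integrable lborel (\<lambda>x. (p x - q x) * k x)" using p q kl k(2) by (intro int_mult_bdd) auto
    show "integrable lborel (\<lambda>x. \<bar>p x - q x\<bar>)" using p q by auto
    fix x show "\<bar>(p x - q x) * k x\<bar> \<le> \<bar>p x - q x\<bar>"
      using k(2)[of x] by (auto simp: abs_mult intro: mult_left_le)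
  qed
  finally show ?thesis .
qed

lemma tend_bound: "(\<And>n. \<bar>f n - (L::real)\<bar> \<le> T n) \<Longrightarrow> T \<longlonglongrightarrow> 0 \<Longrightarrow> f \<longlonglongrightarrow> L"
  by (subst LIM_zero_iff[symmetric]) (rule Lim_null_comparison[where g=T], auto)

lemma eq_bound: "(\<And>n. \<bar>X - (Y::real)\<bar> \<le> T n) \<Longrightarrow> T \<longlonglongrightarrow> 0 \<Longrightarrow> X = Y"
proof -
  assume b: "\<And>n. \<bar>X - Y\<bar> \<le> T n" and T: "T \<longlonglongrightarrow> 0"
  have "\<bar>X - Y\<bar> \<le> 0" by (rule LIMSEQ_le_const[OF T]) (use b in auto)
  then show ?thesis by simp
qed

definition cK :: real where "cK = 1 - 2 * exp (-12)"

lemma cK: "0 \<le> cK" "cK < 1"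
proof -
  have "exp (-12::real) \<le> exp 0" by simp
  moreover have "exp (-12::real) \<le> 1/2"
  proof -
    have "exp (-12::real) \<le> exp (-1)" by simp
    also have "exp (-1::real) \<le> 1/2" using exp_ge_add_one_self[of 1] by (simp add: exp_minus field_simps)
    finally show ?thesis .
  qed
  ultimately show "0 \<le> cK" unfolding cK_def by simp
  show "cK < 1" unfolding cK_def by simp
qed

lemma contract_K2:
  assumes f: "f \<in> borel_measurable borel" "\<And>x. 0 \<le> f x" "prob_space (density lborel (\<lambda>x. ennreal (f x)))"
    and g: "g \<in> borel_measurable borel" "\<And>x. 0 \<le> g x" "prob_space (density lborel (\<lambda>x. ennreal (g x)))"
    and p: "p \<in> borel_measurable borel" "\<And>x. 0 \<le> p x"
      "density lborel (\<lambda>x. ennreal (f x)) \<bind> K2 = density lborel (\<lambda>x. ennreal (p x))"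
    and q: "q \<in> borel_measurable borel" "\<And>x. 0 \<le> q x"
      "density lborel (\<lambda>x. ennreal (g x)) \<bind> K2 = density lborel (\<lambda>x. ennreal (q x))"
  shows "(\<integral>x. \<bar>p x - q x\<bar> \<partial>lborel) \<le> cK * (\<integral>x. \<bar>f x - g x\<bar> \<partial>lborel)"
proof -
  have K2m: "K2 \<in> measurable (density lborel (\<lambda>x. ennreal (h x))) (subprob_algebra borel)" for h :: "real \<Rightarrow> real"
    using K2_measurable measurable_cong_sets by (metis sets_density sets_lborel)
  have pp: "prob_space (density lborel (\<lambda>x. ennreal (p x)))"
    unfolding p(3)[symmetric] by (rule prob_space.prob_space_bind[OF f(3) _ K2m]) (simp add: prob_K2)
  have qp: "prob_space (density lborel (\<lambda>x. ennreal (q x)))"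
    unfolding q(3)[symmetric] by (rule prob_space.prob_space_bind[OF g(3) _ K2m]) (simp add: prob_K2)
  note fi = dens_prob[OF f] and gi = dens_prob[OF g] and pi = dens_prob[OF p(1,2) pp] and qi = dens_prob[OF q(1,2) qp]
  show ?thesis unfolding cK_def
  proof (rule contraction[where Q=Q2 and \<nu>=\<nu>1])
    show "integrable lborel f" "integrable lborel g" "integrable lborel p" "integrable lborel q"
      using fi gi pi qi by auto
    show "(\<integral>x. f x \<partial>lborel) = (\<integral>x. g x \<partial>lborel)" using fi gi by simp
    show "(\<lambda>d. Q2 d A) \<in> borel_measurable borel" if "A \<in> sets borel" for A using that by (rule Q2_meas)
    show "exp (-12) * \<nu>1 A \<le> Q2 d A" if "A \<in> sets borel" for d A using that by (rule Q2_lower)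
    show "Q2 d A + Q2 d (- A) = 1" if "A \<in> sets borel" for d A using that by (rule Q2_compl)
    show "\<nu>1 A + \<nu>1 (- A) = 2" if "A \<in> sets borel" for A using that by (rule \<nu>1_compl)
    show "0 \<le> \<nu>1 A" for A by (simp add: \<nu>1_def)
    show "0 \<le> exp (-12::real)" by simp
    show "(\<integral>x. p x * indicator A x \<partial>lborel) = (\<integral>d. f d * Q2 d A \<partial>lborel)" if A: "A \<in> sets borel" for A
    proof -
      have "(\<integral>x. p x * indicator A x \<partial>lborel) = measure (density lborel (\<lambda>x. ennreal (p x))) A"
        using meas_density[OF p(1,2) _ A] pi by simp
      also have "\<dots> = (\<integral>d. f d * Q2 d A \<partial>lborel)"
        unfolding p(3)[symmetric] Q2_def using bind_dens_integral[OF K2_measurable prob_K2 f(1,2) _ A] fi by simp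
      finally show ?thesis .
    qed
    show "(\<integral>x. q x * indicator A x \<partial>lborel) = (\<integral>d. g d * Q2 d A \<partial>lborel)" if A: "A \<in> sets borel" for A
    proof -
      have "(\<integral>x. q x * indicator A x \<partial>lborel) = measure (density lborel (\<lambda>x. ennreal (q x))) A"
        using meas_density[OF q(1,2) _ A] qi by simp
      also have "\<dots> = (\<integral>d. g d * Q2 d A \<partial>lborel)"
        unfolding q(3)[symmetric] Q2_def using bind_dens_integral[OF K2_measurable prob_K2 g(1,2) _ A] gi by simp
      finally show ?thesis .
    qed
  qed
qed




lemma stat_fixed: assumes "ladder_stationary P" shows "P \<bind> K = P"
proof -
  have s: "sets P = sets borel" "prob_space P" using assms by (auto simp: ladder_stationary_def)
  show ?thesis
  proof (rule measure_eqI)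
    show "sets (P \<bind> K) = sets P" using s by simp
    fix A assume "A \<in> sets (P \<bind> K)"
    then have A: "A \<in> sets borel" using s by simp
    then show "emeasure (P \<bind> K) A = emeasure P A"
      using assms s by (simp add: bindK_emeasure ladder_stationary_def)
  qed
qed

lemma stat_dens: assumes "ladder_stationary P"
  shows "\<exists>f. f \<in> borel_measurable borel \<and> (\<forall>x. 0 \<le> f x) \<and> P = density lborel (\<lambda>x. ennreal (f x))"
proof -
  have s: "sets P = sets borel" "prob_space P" using assms by (auto simp: ladder_stationary_def)
  have "absolutely_continuous lborel P" using ac_bindK[OF s(1)] stat_fixed[OF assms] by simp
  then show ?thesis using dens_exists s by blast
qed

lemma stat_unique: assumes A: "ladder_stationary P1" and B: "ladder_stationary P2" shows "P1 = P2"
proof -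
  obtain f where f: "f \<in> borel_measurable borel" "\<forall>x. 0 \<le> f x" "P1 = density lborel (\<lambda>x. ennreal (f x))"
    using stat_dens[OF A] by blast
  obtain g where g: "g \<in> borel_measurable borel" "\<forall>x. 0 \<le> g x" "P2 = density lborel (\<lambda>x. ennreal (g x))"
    using stat_dens[OF B] by blast
  have s1: "sets P1 = sets borel" "prob_space P1" using A by (auto simp: ladder_stationary_def)
  have s2: "sets P2 = sets borel" "prob_space P2" using B by (auto simp: ladder_stationary_def)
  have e1: "P1 \<bind> K2 = P1" using bind_K2[OF s1(1)] stat_fixed[OF A] by simp
  have e2: "P2 \<bind> K2 = P2" using bind_K2[OF s2(1)] stat_fixed[OF B] by simp
  have pf: "prob_space (density lborel (\<lambda>x. ennreal (f x)))" using s1 f(3) by simp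
  have pg: "prob_space (density lborel (\<lambda>x. ennreal (g x)))" using s2 g(3) by simp
  have ef: "density lborel (\<lambda>x. ennreal (f x)) \<bind> K2 = density lborel (\<lambda>x. ennreal (f x))"
    using e1 f(3) by simp
  have eg: "density lborel (\<lambda>x. ennreal (g x)) \<bind> K2 = density lborel (\<lambda>x. ennreal (g x))"
    using e2 g(3) by simp
  have c: "(\<integral>x. \<bar>f x - g x\<bar> \<partial>lborel) \<le> cK * (\<integral>x. \<bar>f x - g x\<bar> \<partial>lborel)"
    by (rule contract_K2[OF f(1) _ pf g(1) _ pg f(1) _ ef g(1) _ eg]) (use f(2) g(2) in blast)+
  define I where "I = (\<integral>x. \<bar>f x - g x\<bar> \<partial>lborel)"
  have I0: "0 \<le> I" unfolding I_def by simp
  have z: "I = 0"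
  proof (rule ccontr)
    assume "I \<noteq> 0"
    then have "0 < I" using I0 by simp
    then have "cK * I < 1 * I" using cK(2) by (intro mult_strict_right_mono) auto
    then show False using c unfolding I_def[symmetric] by simp
  qed
  have fi: "integrable lborel f" using dens_prob[of f] f s1 by auto
  have gi: "integrable lborel g" using dens_prob[of g] g s2 by auto
  have "AE x in lborel. \<bar>f x - g x\<bar> = 0"
    using z fi gi unfolding I_def by (subst integral_nonneg_eq_0_iff_AE[symmetric]) auto
  then have "density lborel (\<lambda>x. ennreal (f x)) = density lborel (\<lambda>x. ennreal (g x))"
    using f g by (intro density_cong) auto
  then show ?thesis using f g by simp
qed

lemma dens_not_return: assumes f: "f \<in> borel_measurable borel"
  shows "density lborel (\<lambda>x. ennreal (f x)) \<noteq> return borel c"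
proof
  assume e: "density lborel (\<lambda>x. ennreal (f x)) = return borel c"
  have "emeasure (density lborel (\<lambda>x. ennreal (f x))) {c} = (\<integral>\<^sup>+x. ennreal (f x) * indicator {c} x \<partial>lborel)"
    using f by (simp add: emeasure_density)
  also have "\<dots> = 0" by (rule nn_integral_null_set) auto
  finally show False using e by simp
qed




locale chain =
  fixes \<mu> :: "nat \<Rightarrow> real measure" and \<rho>0 :: "real \<Rightarrow> real"
  assumes \<rho>0: "\<rho>0 \<in> borel_measurable borel" "\<And>x. 0 \<le> \<rho>0 x"
    and \<mu>0: "\<mu> 0 = density lborel (\<lambda>x. ennreal (\<rho>0 x))" and P0: "prob_space (\<mu> 0)"
    and \<mu>S: "\<And>n. \<mu> (Suc n) = \<mu> n \<bind> K"
begin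

lemma sets_mu[simp]: "sets (\<mu> n) = sets borel"
  by (induction n) (auto simp: \<mu>0 \<mu>S)

lemma prob_mu: "prob_space (\<mu> n)"
  by (induction n) (auto simp: P0 \<mu>S intro: prob_bindK)

lemma dens_mu: "\<exists>\<rho>. \<rho> \<in> borel_measurable borel \<and> (\<forall>x. 0 \<le> \<rho> x) \<and> \<mu> n = density lborel (\<lambda>x. ennreal (\<rho> x))"
proof (cases n)
  case 0 then show ?thesis using \<rho>0 \<mu>0 by blast
next
  case (Suc m)
  have "absolutely_continuous lborel (\<mu> n)" unfolding Suc \<mu>S by (rule ac_bindK) simp
  then show ?thesis using dens_exists[OF prob_mu sets_mu] by blast
qed

definition rho :: "nat \<Rightarrow> real \<Rightarrow> real" where
  "rho n = (SOME \<rho>. \<rho> \<in> borel_measurable borel \<and> (\<forall>x. 0 \<le> \<rho> x) \<and> \<mu> n = density lborel (\<lambda>x. ennreal (\<rho> x)))"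

lemma rho: "rho n \<in> borel_measurable borel" "\<And>x. 0 \<le> rho n x" "\<mu> n = density lborel (\<lambda>x. ennreal (rho n x))"
  using someI_ex[OF dens_mu[of n]] unfolding rho_def[symmetric] by auto

lemma rho_int: "integrable lborel (rho n)" "(\<integral>x. rho n x \<partial>lborel) = 1"
  using dens_prob[OF rho(1,2)] prob_mu[of n] rho(3)[of n] by auto

lemma mu_K2: "\<mu> (Suc (Suc n)) = \<mu> n \<bind> K2"
  using bind_K2[OF sets_mu[of n]] by (simp add: \<mu>S)

definition a :: "nat \<Rightarrow> real" where "a n = (\<integral>x. \<bar>rho (Suc n) x - rho n x\<bar> \<partial>lborel)"

lemma a_nonneg: "0 \<le> a n" unfolding a_def by simp

lemma a_le2: "a n \<le> 2"
proof -
  have "a n \<le> (\<integral>x. rho (Suc n) x + rho n x \<partial>lborel)"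
    unfolding a_def using rho_int[of n] rho_int[of "Suc n"]
  proof (intro Bochner_Integration.integral_mono)
    fix x show "\<bar>rho (Suc n) x - rho n x\<bar> \<le> rho (Suc n) x + rho n x"
      using rho(2)[of n x] rho(2)[of "Suc n" x] by linarith
  qed auto
  also have "\<dots> = 2" using rho_int[of n] rho_int[of "Suc n"] by simp
  finally show ?thesis .
qed

lemma a_step: "a (Suc (Suc n)) \<le> cK * a n"
  unfolding a_def
proof (rule contract_K2)
  show "prob_space (density lborel (\<lambda>x. ennreal (rho (Suc n) x)))" using prob_mu rho(3) by metis
  show "prob_space (density lborel (\<lambda>x. ennreal (rho n x)))" using prob_mu rho(3) by metis
  show "density lborel (\<lambda>x. ennreal (rho (Suc n) x)) \<bind> K2 = density lborel (\<lambda>x. ennreal (rho (Suc (Suc (Suc n))) x))"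
    using mu_K2[of "Suc n"] rho(3) by metis
  show "density lborel (\<lambda>x. ennreal (rho n x)) \<bind> K2 = density lborel (\<lambda>x. ennreal (rho (Suc (Suc n)) x))"
    using mu_K2[of n] rho(3) by metis
qed (auto simp: rho)

definition s :: real where "s = (1 + cK) / 2"

lemma s: "0 < s" "s < 1" "cK \<le> s^2"
proof -
  show "0 < s" "s < 1" unfolding s_def using cK by auto
  have "0 \<le> (1 - cK)^2" by simp
  then show "cK \<le> s^2" unfolding s_def by (simp add: power2_eq_square field_simps)
qed

lemma a_geom: "a n \<le> (2 / s) * s ^ n \<and> a (Suc n) \<le> (2 / s) * s ^ Suc n"
proof (induction n)
  case 0
  have "2 \<le> 2 / s" using s by (simp add: field_simps)
  then show ?case using a_le2[of 0] a_le2[of 1] s by simp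
next
  case (Suc n)
  have "a (Suc (Suc n)) \<le> cK * a n" by (rule a_step)
  also have "\<dots> \<le> s^2 * ((2 / s) * s ^ n)"
    using Suc.IH s cK a_nonneg[of n] by (intro mult_mono) auto
  also have "\<dots> = (2 / s) * s ^ Suc (Suc n)" by (simp add: power2_eq_square)
  finally show ?case using Suc.IH by simp
qed

lemma a_summable: "summable a"
proof (rule summable_comparison_test)
  show "\<exists>N. \<forall>n\<ge>N. norm (a n) \<le> (2 / s) * s ^ n" using a_geom a_nonneg by auto
  show "summable (\<lambda>n. (2 / s) * s ^ n)" using s by (intro summable_mult summable_geometric) auto
qed

definition T :: "nat \<Rightarrow> real" where "T n = (\<Sum>k. a (k + n))"

lemma T_lim: "T \<longlonglongrightarrow> 0"
proof -
  have "T = (\<lambda>n. suminf a - (\<Sum>i<n. a i))"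
    unfolding T_def by (rule ext) (rule suminf_minus_initial_segment[OF a_summable])
  moreover have "(\<lambda>n. suminf a - (\<Sum>i<n. a i)) \<longlonglongrightarrow> suminf a - suminf a"
    by (intro tendsto_diff tendsto_const summable_LIMSEQ a_summable)
  ultimately show ?thesis by simp
qed

lemma T_nonneg: "0 \<le> T n" unfolding T_def
  using a_summable by (intro suminf_nonneg summable_ignore_initial_segment) (auto simp: a_nonneg)

end



context chain begin

definition dd :: "nat \<Rightarrow> real \<Rightarrow> real" where "dd n x = \<bar>rho (Suc n) x - rho n x\<bar>"

lemma dd_nonneg: "0 \<le> dd n x" unfolding dd_def by simp

lemma rho_meas[measurable]: "rho n \<in> borel_measurable borel" by (rule rho(1))

lemma dd_meas[measurable]: "dd n \<in> borel_measurable borel" unfolding dd_def[abs_def] by measurable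

lemma nn_dd: "(\<integral>\<^sup>+x. ennreal (dd n x) \<partial>lborel) = ennreal (a n)"
  unfolding dd_def a_def using rho_int[of n] rho_int[of "Suc n"] by (intro nn_integral_eq_integral) auto

lemma nn_dd_tail: "(\<integral>\<^sup>+x. (\<Sum>k. ennreal (dd (k + n) x)) \<partial>lborel) = ennreal (T n)"
proof -
  have "(\<integral>\<^sup>+x. (\<Sum>k. ennreal (dd (k + n) x)) \<partial>lborel) = (\<Sum>k. (\<integral>\<^sup>+x. ennreal (dd (k + n) x) \<partial>lborel))"
    by (rule nn_integral_suminf) simp
  also have "\<dots> = (\<Sum>k. ennreal (a (k + n)))" by (simp add: nn_dd)
  also have "\<dots> = ennreal (T n)" unfolding T_def
    by (rule suminf_ennreal2) (auto simp: a_nonneg intro: summable_ignore_initial_segment a_summable)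
  finally show ?thesis .
qed

definition G :: "real set" where "G = {x. (\<Sum>n. ennreal (dd n x)) \<noteq> top}"

lemma G_sets[measurable]: "G \<in> sets borel" unfolding G_def by measurable

lemma AE_G: "AE x in lborel. x \<in> G"
proof -
  have "(\<integral>\<^sup>+x. (\<Sum>n. ennreal (dd (n + 0) x)) \<partial>lborel) \<noteq> top" using nn_dd_tail[of 0] by simp
  then have "AE x in lborel. (\<Sum>n. ennreal (dd (n + 0) x)) \<noteq> top"
    using nn_integral_noteq_infinite[of "\<lambda>x. \<Sum>n. ennreal (dd (n + 0) x)" lborel] by simp
  then show ?thesis unfolding G_def by simp
qed

lemma G_summable: "x \<in> G \<Longrightarrow> summable (\<lambda>n. dd n x)"
  unfolding G_def by (rule summable_suminf_not_top) (auto simp: dd_nonneg)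

lemma partial_bound: "\<bar>rho (j + n) x - rho n x\<bar> \<le> (\<Sum>k<j. dd (k + n) x)"
proof (induction j)
  case (Suc j)
  have "\<bar>rho (Suc j + n) x - rho n x\<bar> \<le> \<bar>rho (Suc (j + n)) x - rho (j + n) x\<bar> + \<bar>rho (j + n) x - rho n x\<bar>"
    by simp
  also have "\<dots> \<le> dd (j + n) x + (\<Sum>k<j. dd (k + n) x)" using Suc.IH by (simp add: dd_def)
  finally show ?case by (simp add: add.commute)
qed simp

lemma tail_bound: assumes "x \<in> G" shows "\<bar>rho (j + n) x - rho n x\<bar> \<le> (\<Sum>k. dd (k + n) x)"
proof -
  have "(\<Sum>k<j. dd (k + n) x) \<le> (\<Sum>k. dd (k + n) x)"
    using G_summable[OF assms] by (intro sum_le_suminf summable_ignore_initial_segment) (auto simp: dd_nonneg)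
  then show ?thesis using partial_bound[of j n x] by simp
qed

lemma G_conv: assumes "x \<in> G" shows "convergent (\<lambda>n. rho n x)"
proof -
  have "summable (\<lambda>k. rho (Suc k) x - rho k x)"
    using G_summable[OF assms] unfolding dd_def by (rule summable_rabs_cancel)
  then have "(\<lambda>n. \<Sum>k<n. rho (Suc k) x - rho k x) \<longlonglongrightarrow> (\<Sum>k. rho (Suc k) x - rho k x)"
    by (rule summable_LIMSEQ)
  then have "(\<lambda>n. rho 0 x + (\<Sum>k<n. rho (Suc k) x - rho k x)) \<longlonglongrightarrow> rho 0 x + (\<Sum>k. rho (Suc k) x - rho k x)"
    by (intro tendsto_add tendsto_const)
  moreover have "(\<lambda>n. rho 0 x + (\<Sum>k<n. rho (Suc k) x - rho k x)) = (\<lambda>n. rho n x)"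
    by (rule ext) (simp add: sum_lessThan_telescope[where f="\<lambda>k. rho k x"])
  ultimately show ?thesis unfolding convergent_def by auto
qed

definition rs :: "nat \<Rightarrow> real \<Rightarrow> real" where "rs n x = (if x \<in> G then rho n x else 0)"
definition ri :: "real \<Rightarrow> real" where "ri x = lim (\<lambda>n. rs n x)"

lemma rs_meas[measurable]: "rs n \<in> borel_measurable borel" unfolding rs_def[abs_def] by measurable

lemma rs_nonneg: "0 \<le> rs n x" unfolding rs_def by (simp add: rho(2))

lemma rs_lim: "(\<lambda>n. rs n x) \<longlonglongrightarrow> ri x"
proof (cases "x \<in> G")
  case True
  then have "convergent (\<lambda>n. rs n x)" using G_conv by (simp add: rs_def)
  then show ?thesis unfolding ri_def by (simp add: convergent_LIMSEQ_iff)
next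
  case False
  then show ?thesis unfolding ri_def rs_def by simp
qed

lemma ri_meas[measurable]: "ri \<in> borel_measurable borel"
  by (rule borel_measurable_LIMSEQ_metric[OF rs_meas rs_lim])

lemma ri_nonneg: "0 \<le> ri x"
  by (rule LIMSEQ_le_const[OF rs_lim]) (auto simp: rs_nonneg)

lemma mu_rs: "\<mu> n = density lborel (\<lambda>x. ennreal (rs n x))"
proof -
  have "density lborel (\<lambda>x. ennreal (rho n x)) = density lborel (\<lambda>x. ennreal (rs n x))"
    by (rule density_cong) (use AE_G in \<open>auto simp: rs_def\<close>)
  then show ?thesis using rho(3) by simp
qed

lemma rs_int: "integrable lborel (rs n)" "(\<integral>x. rs n x \<partial>lborel) = 1"
  using dens_prob[OF rs_meas rs_nonneg] prob_mu[of n] mu_rs[of n] by auto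

lemma ri_tail_pt: "ennreal \<bar>ri x - rs n x\<bar> \<le> (\<Sum>k. ennreal (dd (k + n) x))"
proof (cases "x \<in> G")
  case True
  have lim: "(\<lambda>j. \<bar>rho (j + n) x - rho n x\<bar>) \<longlonglongrightarrow> \<bar>ri x - rho n x\<bar>"
  proof -
    have "(\<lambda>j. rs (j + n) x) \<longlonglongrightarrow> ri x" by (rule LIMSEQ_ignore_initial_segment[OF rs_lim])
    then have "(\<lambda>j. rho (j + n) x) \<longlonglongrightarrow> ri x" using True by (simp add: rs_def)
    then show ?thesis by (intro tendsto_rabs tendsto_diff tendsto_const)
  qed
  have "\<bar>ri x - rho n x\<bar> \<le> (\<Sum>k. dd (k + n) x)"
    by (rule LIMSEQ_le_const2[OF lim]) (use tail_bound[OF True] in auto)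
  moreover have "(\<Sum>k. ennreal (dd (k + n) x)) = ennreal (\<Sum>k. dd (k + n) x)"
    using G_summable[OF True] by (intro suminf_ennreal2 summable_ignore_initial_segment) (auto simp: dd_nonneg)
  ultimately show ?thesis using True by (simp add: rs_def ennreal_leI)
next
  case False
  then have "ri x = 0" unfolding ri_def rs_def by simp
  then show ?thesis using False by (simp add: rs_def)
qed

lemma nn_tail: "(\<integral>\<^sup>+x. ennreal \<bar>ri x - rs n x\<bar> \<partial>lborel) \<le> ennreal (T n)"
proof -
  have "(\<integral>\<^sup>+x. ennreal \<bar>ri x - rs n x\<bar> \<partial>lborel) \<le> (\<integral>\<^sup>+x. (\<Sum>k. ennreal (dd (k + n) x)) \<partial>lborel)"
    by (intro nn_integral_mono ri_tail_pt)
  then show ?thesis using nn_dd_tail by simp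
qed

lemma diff_int: "integrable lborel (\<lambda>x. ri x - rs n x)"
proof (rule integrableI_bounded)
  show "(\<integral>\<^sup>+x. ennreal (norm (ri x - rs n x)) \<partial>lborel) < \<infinity>"
    using nn_tail[of n] by (simp add: le_less_trans)
qed simp

lemma ri_int: "integrable lborel ri"
proof -
  have "integrable lborel (\<lambda>x. (ri x - rs 0 x) + rs 0 x)"
    using diff_int[of 0] rs_int(1)[of 0] by (rule Bochner_Integration.integrable_add)
  then show ?thesis by simp
qed

lemma L1_bound: "(\<integral>x. \<bar>ri x - rs n x\<bar> \<partial>lborel) \<le> T n"
proof -
  have "ennreal (\<integral>x. \<bar>ri x - rs n x\<bar> \<partial>lborel) = (\<integral>\<^sup>+x. ennreal \<bar>ri x - rs n x\<bar> \<partial>lborel)"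
    using diff_int by (intro nn_integral_eq_integral[symmetric]) auto
  also have "\<dots> \<le> ennreal (T n)" by (rule nn_tail)
  finally show ?thesis using T_nonneg by (simp add: ennreal_le_iff)
qed

end



context chain begin

abbreviation "\<pi> \<equiv> density lborel (\<lambda>x. ennreal (ri x))"

lemma int_diff_le: "\<bar>(\<integral>x. ri x \<partial>lborel) - (\<integral>x. rs n x \<partial>lborel)\<bar> \<le> T n"
proof -
  have "(\<integral>x. ri x \<partial>lborel) - (\<integral>x. rs n x \<partial>lborel) = (\<integral>x. ri x - rs n x \<partial>lborel)"
    using ri_int rs_int(1)[of n] by simp
  also have "\<bar>\<dots>\<bar> \<le> (\<integral>x. \<bar>ri x - rs n x\<bar> \<partial>lborel)"
    by (rule integral_abs_bound_integral) (use diff_int in auto)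
  finally show ?thesis using L1_bound[of n] by simp
qed

lemma ri_one: "(\<integral>x. ri x \<partial>lborel) = 1"
  by (rule eq_bound[OF _ T_lim]) (use int_diff_le rs_int in auto)

lemma prob_pi: "prob_space \<pi>"
proof (rule prob_spaceI)
  have "emeasure \<pi> (space \<pi>) = (\<integral>\<^sup>+x. ennreal (ri x) \<partial>lborel)"
    by (simp add: emeasure_density)
  also have "\<dots> = ennreal (\<integral>x. ri x \<partial>lborel)"
    using ri_int ri_nonneg by (intro nn_integral_eq_integral) auto
  finally show "emeasure \<pi> (space \<pi>) = 1" by (simp add: ri_one)
qed

lemma mu_bind_rs: "\<mu> (Suc n) = density lborel (\<lambda>x. ennreal (rs n x)) \<bind> K"
  using \<mu>S[of n] mu_rs[of n] by simp

lemma ind_bound: "\<bar>indicator A x\<bar> \<le> (1::real)" by (simp add: indicator_def)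

lemma kern_bound: "\<bar>measure (K d) A\<bar> \<le> 1"
  using prob_space.prob_le_1[OF kernel_prob] by (simp add: measure_nonneg)

lemma kern_meas: "A \<in> sets borel \<Longrightarrow> (\<lambda>d. measure (K d) A) \<in> borel_measurable borel"
  by (rule measurable_compose[OF kernel_measurable measurable_measure_subprob_algebra]) simp

lemma pi_fixed: "\<pi> \<bind> K = \<pi>"
proof -
  have "measure \<pi> A = measure (\<pi> \<bind> K) A" if A: "A \<in> sets borel" for A
  proof -
    have e1: "measure \<pi> A = (\<integral>x. ri x * indicator A x \<partial>lborel)"
      using meas_density[OF ri_meas ri_nonneg ri_int A] .
    have e2: "measure (\<pi> \<bind> K) A = (\<integral>d. ri d * measure (K d) A \<partial>lborel)"
      by (rule bind_dens_integral(1)[OF kernel_measurable kernel_prob ri_meas ri_nonneg ri_int A])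
    have e3: "(\<integral>x. rs (Suc n) x * indicator A x \<partial>lborel) = (\<integral>d. rs n d * measure (K d) A \<partial>lborel)" for n
    proof -
      have "(\<integral>x. rs (Suc n) x * indicator A x \<partial>lborel) = measure (\<mu> (Suc n)) A"
        using meas_density[OF rs_meas rs_nonneg rs_int(1) A] mu_rs by simp
      also have "\<dots> = (\<integral>d. rs n d * measure (K d) A \<partial>lborel)" unfolding mu_bind_rs
        by (rule bind_dens_integral(1)[OF kernel_measurable kernel_prob rs_meas rs_nonneg rs_int(1) A])
      finally show ?thesis .
    qed
    have "(\<integral>x. ri x * indicator A x \<partial>lborel) = (\<integral>d. ri d * measure (K d) A \<partial>lborel)"
    proof (rule eq_bound[where T="\<lambda>n. T (Suc n) + T n"])
      show "(\<lambda>n. T (Suc n) + T n) \<longlonglongrightarrow> 0"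
        using tendsto_add[OF LIMSEQ_Suc[OF T_lim] T_lim] by simp
      fix n
      have b1: "\<bar>(\<integral>x. ri x * indicator A x \<partial>lborel) - (\<integral>x. rs (Suc n) x * indicator A x \<partial>lborel)\<bar> \<le> T (Suc n)"
      proof -
        have im: "(indicator A :: real \<Rightarrow> real) \<in> borel_measurable borel" using A by simp
        show ?thesis using diff_bound[OF ri_int rs_int(1)[of "Suc n"] im ind_bound[of A]] L1_bound[of "Suc n"] by simp
      qed
      have b2: "\<bar>(\<integral>d. rs n d * measure (K d) A \<partial>lborel) - (\<integral>d. ri d * measure (K d) A \<partial>lborel)\<bar> \<le> T n"
      proof -
        have "\<bar>(\<integral>d. rs n d * measure (K d) A \<partial>lborel) - (\<integral>d. ri d * measure (K d) A \<partial>lborel)\<bar>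
              \<le> (\<integral>x. \<bar>rs n x - ri x\<bar> \<partial>lborel)"
          by (rule diff_bound[OF rs_int(1) ri_int kern_meas[OF A] kern_bound])
        also have "\<dots> = (\<integral>x. \<bar>ri x - rs n x\<bar> \<partial>lborel)" by (simp add: abs_minus_commute)
        finally show ?thesis using L1_bound[of n] by simp
      qed
      show "\<bar>(\<integral>x. ri x * indicator A x \<partial>lborel) - (\<integral>d. ri d * measure (K d) A \<partial>lborel)\<bar> \<le> T (Suc n) + T n"
        using b1 b2 e3[of n] by linarith
    qed
    then show ?thesis using e1 e2 by simp
  qed
  moreover have "prob_space (\<pi> \<bind> K)" by (rule prob_bindK[OF prob_pi]) simp
  ultimately show ?thesis
  proof (intro measure_eqI)
    fix A assume "A \<in> sets (\<pi> \<bind> K)"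
    then have A: "A \<in> sets borel" by simp
    assume m: "\<And>A. A \<in> sets borel \<Longrightarrow> measure \<pi> A = measure (\<pi> \<bind> K) A" and p: "prob_space (\<pi> \<bind> K)"
    show "emeasure (\<pi> \<bind> K) A = emeasure \<pi> A"
      using finite_measure.emeasure_eq_measure[OF prob_space.finite_measure[OF p]]
        finite_measure.emeasure_eq_measure[OF prob_space.finite_measure[OF prob_pi]] m[OF A] by simp
  qed simp
qed

lemma pi_stationary: "ladder_stationary \<pi>"
  unfolding ladder_stationary_def
proof (intro conjI ballI)
  show "prob_space \<pi>" by (rule prob_pi)
  show "sets \<pi> = sets borel" by simp
  fix A :: "real set" assume A: "A \<in> sets borel"
  have "emeasure \<pi> A = emeasure (\<pi> \<bind> K) A" using pi_fixed by simp
  also have "\<dots> = (\<integral>\<^sup>+d. emeasure (K d) A \<partial>\<pi>)" using A by (simp add: bindK_emeasure)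
  finally show "emeasure \<pi> A = (\<integral>\<^sup>+d. emeasure (K d) A \<partial>\<pi>)" .
qed

lemma weak: "weak_conv_m \<mu> \<pi>"
  unfolding weak_conv_m_def weak_conv_def
proof (intro allI impI)
  fix x :: real
  have "cdf (\<mu> n) x = (\<integral>y. rs n y * indicator {..x} y \<partial>lborel)" for n
    unfolding cdf_def using meas_density[OF rs_meas rs_nonneg rs_int(1), of "{..x}" n] mu_rs[of n] by simp
  moreover have "cdf \<pi> x = (\<integral>y. ri y * indicator {..x} y \<partial>lborel)"
    unfolding cdf_def using meas_density[OF ri_meas ri_nonneg ri_int, of "{..x}"] by simp
  moreover have "(\<lambda>n. (\<integral>y. rs n y * indicator {..x} y \<partial>lborel)) \<longlonglongrightarrow> (\<integral>y. ri y * indicator {..x} y \<partial>lborel)"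
  proof (rule tend_bound[OF _ T_lim])
    fix n
    have "\<bar>(\<integral>y. rs n y * indicator {..x} y \<partial>lborel) - (\<integral>y. ri y * indicator {..x} y \<partial>lborel)\<bar>
          \<le> (\<integral>y. \<bar>rs n y - ri y\<bar> \<partial>lborel)"
      by (rule diff_bound[OF rs_int(1) ri_int _ ind_bound]) simp
    also have "\<dots> = (\<integral>y. \<bar>ri y - rs n y\<bar> \<partial>lborel)" by (simp add: abs_minus_commute)
    finally show "\<bar>(\<integral>y. rs n y * indicator {..x} y \<partial>lborel) - (\<integral>y. ri y * indicator {..x} y \<partial>lborel)\<bar> \<le> T n"
      using L1_bound[of n] by simp
  qed
  ultimately show "(\<lambda>n. cdf (\<mu> n) x) \<longlonglongrightarrow> cdf \<pi> x" by simp
qed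

end



definition En :: "nat \<Rightarrow> edge set" where
  "En n = {ZE 0} \<union> {XE i | i. 1 \<le> i \<and> i \<le> n} \<union> {YE i | i. 1 \<le> i \<and> i \<le> n} \<union> {ZE i | i. i \<le> n}"

lemma En_sub: "En n \<subseteq> ladder_edges" unfolding En_def ladder_edges_def by auto

lemma En_Suc: "En n \<subseteq> En (Suc n)" "XE (Suc n) \<in> En (Suc n)" "YE (Suc n) \<in> En (Suc n)" "ZE (Suc n) \<in> En (Suc n)"
  unfolding En_def by auto

lemma En_disj: "En n \<inter> {XE (Suc n), YE (Suc n), ZE (Suc n)} = {}" unfolding En_def by auto

lemma Delta_dep: "(\<And>e. e \<in> En n \<Longrightarrow> h e = W e \<omega>) \<Longrightarrow> Delta W n \<omega> = Delta (\<lambda>e g. g e) n h"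
proof (induction n)
  case 0 then show ?case by (simp add: En_def)
next
  case (Suc n)
  have "Delta W n \<omega> = Delta (\<lambda>e g. g e) n h" using Suc.IH Suc.prems En_Suc(1) by blast
  moreover have "h (XE (Suc n)) = W (XE (Suc n)) \<omega>" "h (YE (Suc n)) = W (YE (Suc n)) \<omega>" "h (ZE (Suc n)) = W (ZE (Suc n)) \<omega>"
    using Suc.prems En_Suc by auto
  ultimately show ?case by simp
qed

lemma DeltaF_meas: "En n \<subseteq> I \<Longrightarrow> (\<lambda>h. Delta (\<lambda>e g. g e) n h) \<in> borel_measurable (PiM I (\<lambda>_. borel))"
proof (induction n)
  case 0 then show ?case by (simp add: En_def measurable_component_singleton[where M="\<lambda>_. borel"])
next
  case (Suc n)
  have [measurable]: "(\<lambda>h. Delta (\<lambda>e g. g e) n h) \<in> borel_measurable (PiM I (\<lambda>_. borel))"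
    using Suc En_Suc(1) by blast
  have [measurable]: "(\<lambda>h. h (XE (Suc n))) \<in> borel_measurable (PiM I (\<lambda>_. borel))"
    "(\<lambda>h. h (YE (Suc n))) \<in> borel_measurable (PiM I (\<lambda>_. borel))"
    "(\<lambda>h. h (ZE (Suc n))) \<in> borel_measurable (PiM I (\<lambda>_. borel))"
    using Suc.prems En_Suc by (auto intro!: measurable_component_singleton[where M="\<lambda>_. borel"])
  show ?case unfolding Delta.simps ladder_step_def by measurable
qed

locale ladder =
  fixes M :: "'a measure" and W :: "edge \<Rightarrow> 'a \<Rightarrow> real"
  assumes PM: "prob_space M"
    and ind: "prob_space.indep_vars M (\<lambda>_. borel) W ladder_edges"
    and dist: "\<forall>e \<in> ladder_edges. distributed M lborel (W e) (\<lambda>x. ennreal (exponential_density 1 x))"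
begin

lemma W_meas[measurable]: "e \<in> ladder_edges \<Longrightarrow> W e \<in> borel_measurable M"
  using dist by (auto simp: distributed_def)

lemma distr_W: "e \<in> ladder_edges \<Longrightarrow> distr M borel (W e) = Exp1"
proof -
  assume e: "e \<in> ladder_edges"
  have "distr M borel (W e) = distr M lborel (W e)" by (rule distr_cong) auto
  also have "\<dots> = Exp1" using dist e by (auto simp: distributed_def Exp1_def)
  finally show ?thesis .
qed

lemma restr_meas: "I \<subseteq> ladder_edges \<Longrightarrow> (\<lambda>\<omega>. restrict (\<lambda>i. W i \<omega>) I) \<in> measurable M (PiM I (\<lambda>_. borel))"
  by (intro measurable_restrict W_meas) blast

lemma indep_gen:
  assumes I: "I1 \<inter> I2 = {}" "I1 \<subseteq> ladder_edges" "I2 \<subseteq> ladder_edges"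
    and F1: "F1 \<in> measurable (PiM I1 (\<lambda>_. borel)) S" and F2: "F2 \<in> measurable (PiM I2 (\<lambda>_. borel)) T"
  shows "distr M S (\<lambda>\<omega>. F1 (restrict (\<lambda>i. W i \<omega>) I1)) \<Otimes>\<^sub>M distr M T (\<lambda>\<omega>. F2 (restrict (\<lambda>i. W i \<omega>) I2))
       = distr M (S \<Otimes>\<^sub>M T) (\<lambda>\<omega>. (F1 (restrict (\<lambda>i. W i \<omega>) I1), F2 (restrict (\<lambda>i. W i \<omega>) I2)))"
proof -
  let ?r1 = "\<lambda>\<omega>. restrict (\<lambda>i. W i \<omega>) I1" and ?r2 = "\<lambda>\<omega>. restrict (\<lambda>i. W i \<omega>) I2"
  let ?P1 = "PiM I1 (\<lambda>_. borel) :: (edge \<Rightarrow> real) measure" and ?P2 = "PiM I2 (\<lambda>_. borel) :: (edge \<Rightarrow> real) measure"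
  have r1: "?r1 \<in> measurable M ?P1" and r2: "?r2 \<in> measurable M ?P2" using I restr_meas by auto
  have iv: "prob_space.indep_var M ?P1 ?r1 ?P2 ?r2"
    using prob_space.indep_var_restrict[OF PM ind I] .
  then have J: "distr M ?P1 ?r1 \<Otimes>\<^sub>M distr M ?P2 ?r2 = distr M (?P1 \<Otimes>\<^sub>M ?P2) (\<lambda>\<omega>. (?r1 \<omega>, ?r2 \<omega>))"
    using prob_space.indep_var_distribution_eq[OF PM] by blast
  have sf: "sigma_finite_measure (distr (distr M ?P2 ?r2) T F2)"
    using PM r2 F2 by (intro prob_space_imp_sigma_finite prob_space.prob_space_distr) (auto intro: prob_space.prob_space_distr)
  have "distr M S (\<lambda>\<omega>. F1 (?r1 \<omega>)) \<Otimes>\<^sub>M distr M T (\<lambda>\<omega>. F2 (?r2 \<omega>))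
      = distr (distr M ?P1 ?r1) S F1 \<Otimes>\<^sub>M distr (distr M ?P2 ?r2) T F2"
    using r1 r2 F1 F2 by (simp add: distr_distr comp_def)
  also have "\<dots> = distr (distr M ?P1 ?r1 \<Otimes>\<^sub>M distr M ?P2 ?r2) (S \<Otimes>\<^sub>M T) (\<lambda>(x, y). (F1 x, F2 y))"
    by (rule pair_measure_distr[OF _ _ sf]) (use F1 F2 in auto)
  also have "\<dots> = distr M (S \<Otimes>\<^sub>M T) (\<lambda>\<omega>. (F1 (?r1 \<omega>), F2 (?r2 \<omega>)))"
    unfolding J using r1 r2 F1 F2 by (subst distr_distr) (auto simp: comp_def)
  finally show ?thesis .
qed

lemma XE_in: "XE (Suc n) \<in> ladder_edges" and YE_in: "YE (Suc n) \<in> ladder_edges" and ZE_in: "ZE n \<in> ladder_edges"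
  by (auto simp: ladder_edges_def)

lemma distr_triple: "distr M (borel \<Otimes>\<^sub>M (borel \<Otimes>\<^sub>M borel)) (\<lambda>\<omega>. (W (XE (Suc n)) \<omega>, W (YE (Suc n)) \<omega>, W (ZE (Suc n)) \<omega>)) = E3"
proof -
  have yz: "distr M (borel \<Otimes>\<^sub>M borel) (\<lambda>\<omega>. (W (YE (Suc n)) \<omega>, W (ZE (Suc n)) \<omega>)) = Exp1 \<Otimes>\<^sub>M Exp1"
    using indep_gen[of "{YE (Suc n)}" "{ZE (Suc n)}" "\<lambda>h. h (YE (Suc n))" borel "\<lambda>h. h (ZE (Suc n))" borel]
    using YE_in ZE_in distr_W
    by (simp add: measurable_component_singleton[where M="\<lambda>_. borel"])
  have "distr M (borel \<Otimes>\<^sub>M (borel \<Otimes>\<^sub>M borel)) (\<lambda>\<omega>. (W (XE (Suc n)) \<omega>, W (YE (Suc n)) \<omega>, W (ZE (Suc n)) \<omega>))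
     = distr M borel (W (XE (Suc n))) \<Otimes>\<^sub>M distr M (borel \<Otimes>\<^sub>M borel) (\<lambda>\<omega>. (W (YE (Suc n)) \<omega>, W (ZE (Suc n)) \<omega>))"
    using indep_gen[of "{XE (Suc n)}" "{YE (Suc n), ZE (Suc n)}" "\<lambda>h. h (XE (Suc n))" borel
        "\<lambda>h. (h (YE (Suc n)), h (ZE (Suc n)))" "borel \<Otimes>\<^sub>M borel"]
    using XE_in YE_in ZE_in
    by (simp add: measurable_component_singleton[where M="\<lambda>_. borel"])
  also have "\<dots> = E3" unfolding E3_def using yz distr_W XE_in by simp
  finally show ?thesis .
qed

abbreviation "\<mu>W n \<equiv> distr M borel (Delta W n)"

lemma Delta_meas: "Delta W n \<in> borel_measurable M"
proof -
  have "Delta W n = (\<lambda>h. Delta (\<lambda>e g. g e) n h) \<circ> (\<lambda>\<omega>. restrict (\<lambda>i. W i \<omega>) (En n))"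
    by (rule ext) (auto intro!: Delta_dep)
  moreover have "(\<lambda>\<omega>. restrict (\<lambda>i. W i \<omega>) (En n)) \<in> measurable M (PiM (En n) (\<lambda>_. borel))"
    using En_sub by (intro restr_meas)
  ultimately show ?thesis using DeltaF_meas[of n "En n"] by (simp add: measurable_comp)
qed

lemma joint: "distr M (borel \<Otimes>\<^sub>M (borel \<Otimes>\<^sub>M (borel \<Otimes>\<^sub>M borel)))
    (\<lambda>\<omega>. (Delta W n \<omega>, W (XE (Suc n)) \<omega>, W (YE (Suc n)) \<omega>, W (ZE (Suc n)) \<omega>)) = \<mu>W n \<Otimes>\<^sub>M E3"
proof -
  let ?F2 = "\<lambda>h. (h (XE (Suc n)), h (YE (Suc n)), h (ZE (Suc n)))"
  let ?I2 = "{XE (Suc n), YE (Suc n), ZE (Suc n)}"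
  have F2: "?F2 \<in> measurable (PiM ?I2 (\<lambda>_. borel)) (borel \<Otimes>\<^sub>M (borel \<Otimes>\<^sub>M borel))"
    by (simp add: measurable_component_singleton[where M="\<lambda>_. borel"])
  have eqD: "Delta (\<lambda>e g. g e) n (restrict (\<lambda>i. W i \<omega>) (En n)) = Delta W n \<omega>" for \<omega>
    by (auto intro!: Delta_dep[symmetric])
  have eqT: "(\<lambda>\<omega>. ?F2 (restrict (\<lambda>i. W i \<omega>) ?I2)) = (\<lambda>\<omega>. (W (XE (Suc n)) \<omega>, W (YE (Suc n)) \<omega>, W (ZE (Suc n)) \<omega>))"
    by auto
  show ?thesis
    using indep_gen[OF En_disj En_sub _ DeltaF_meas[OF order_refl] F2] XE_in YE_in ZE_in
    unfolding eqT distr_triple by (simp add: eqD)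
qed

lemma sf_E3: "sigma_finite_measure E3" using E3_prob by (rule prob_space_imp_sigma_finite)

lemma mu_Suc: "\<mu>W (Suc n) = \<mu>W n \<bind> K"
proof (rule measure_eqI)
  show "sets (\<mu>W (Suc n)) = sets (\<mu>W n \<bind> K)" by simp
  fix A assume "A \<in> sets (\<mu>W (Suc n))"
  then have A: "A \<in> sets borel" by simp
  let ?P = "\<lambda>\<omega>. (Delta W n \<omega>, W (XE (Suc n)) \<omega>, W (YE (Suc n)) \<omega>, W (ZE (Suc n)) \<omega>)"
  let ?S = "{(d, x, y, z). ladder_step d x y z \<in> A}"
  have Pm: "?P \<in> measurable M (borel \<Otimes>\<^sub>M (borel \<Otimes>\<^sub>M (borel \<Otimes>\<^sub>M borel)))"
    using Delta_meas XE_in YE_in ZE_in by measurable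
  have Ss: "?S \<in> sets (borel \<Otimes>\<^sub>M (borel \<Otimes>\<^sub>M (borel \<Otimes>\<^sub>M borel)))"
  proof -
    have "(\<lambda>(d, x, y, z). ladder_step d x y z) \<in> borel_measurable (borel \<Otimes>\<^sub>M (borel \<Otimes>\<^sub>M (borel \<Otimes>\<^sub>M borel)))"
      unfolding ladder_step_def by measurable
    from measurable_sets[OF this A] show ?thesis by (simp add: space_pair_measure vimage_def case_prod_beta')
  qed
  have "emeasure (\<mu>W (Suc n)) A = emeasure M (Delta W (Suc n) -` A \<inter> space M)"
    using A by (intro emeasure_distr) (auto simp: Delta_meas)
  also have "\<dots> = emeasure M (?P -` ?S \<inter> space M)"
    by (intro arg_cong[where f="emeasure M"]) auto
  also have "\<dots> = emeasure (distr M (borel \<Otimes>\<^sub>M (borel \<Otimes>\<^sub>M (borel \<Otimes>\<^sub>M borel))) ?P) ?S"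
    using Ss Pm by (intro emeasure_distr[symmetric]) auto
  also have "\<dots> = emeasure (\<mu>W n \<Otimes>\<^sub>M E3) ?S" by (simp add: joint)
  also have "\<dots> = (\<integral>\<^sup>+d. emeasure E3 (Pair d -` ?S) \<partial>\<mu>W n)"
  proof (rule sigma_finite_measure.emeasure_pair_measure_alt[OF sf_E3])
    have "sets (\<mu>W n \<Otimes>\<^sub>M E3) = sets (borel \<Otimes>\<^sub>M (borel \<Otimes>\<^sub>M (borel \<Otimes>\<^sub>M borel)))"
      by (intro sets_pair_measure_cong) (auto simp: sets_E3)
    then show "?S \<in> sets (\<mu>W n \<Otimes>\<^sub>M E3)" using Ss by simp
  qed
  also have "\<dots> = (\<integral>\<^sup>+d. emeasure (K d) A \<partial>\<mu>W n)"
    using A by (intro nn_integral_cong) (simp add: kernel_emeasure vimage_def)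
  also have "\<dots> = emeasure (\<mu>W n \<bind> K) A" using A by (simp add: bindK_emeasure)
  finally show "emeasure (\<mu>W (Suc n)) A = emeasure (\<mu>W n \<bind> K) A" .
qed

lemma Delta0: "Delta W 0 = W (ZE 0)" by (rule ext) simp

lemma is_chain: "chain \<mu>W (exponential_density 1)"
proof (rule chain.intro)
  show "exponential_density 1 \<in> borel_measurable borel" by (simp add: exponential_density_def)
  show "0 \<le> exponential_density 1 x" for x by (simp add: exponential_density_def)
  show "\<mu>W 0 = density lborel (\<lambda>x. ennreal (exponential_density 1 x))"
    using distr_W[OF ZE_in[of 0]] by (simp add: Exp1_def Delta0)
  show "prob_space (\<mu>W 0)" using distr_W[OF ZE_in[of 0]] Exp1_prob by (simp add: Delta0)
  show "\<mu>W (Suc n) = \<mu>W n \<bind> K" for n by (rule mu_Suc)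
qed

end



theorem mainTheorem5:
  fixes M :: "'a measure" and W :: "edge \<Rightarrow> 'a \<Rightarrow> real"
  assumes "prob_space M"
    and "prob_space.indep_vars M (\<lambda>_. borel) W ladder_edges"
    and "\<forall>e \<in> ladder_edges. distributed M lborel (W e) (\<lambda>x. ennreal (exponential_density 1 x))"
  shows "\<exists>\<pi>. ladder_stationary \<pi>
           \<and> (\<forall>\<pi>'. ladder_stationary \<pi>' \<longrightarrow> \<pi>' = \<pi>)
           \<and> (\<forall>c. \<pi> \<noteq> return borel c)
           \<and> weak_conv_m (\<lambda>n. distr M borel (Delta W n)) \<pi>
           \<and> (\<exists>\<rho> :: real \<Rightarrow> real. \<exists>\<rho>s :: nat \<Rightarrow> real \<Rightarrow> real.
                \<rho> \<in> borel_measurable borel \<and> (\<forall>x. 0 \<le> \<rho> x)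
              \<and> \<pi> = density lborel (\<lambda>x. ennreal (\<rho> x))
              \<and> (\<forall>n. (\<forall>x. 0 \<le> \<rho>s n x)
                     \<and> distributed M lborel (Delta W n) (\<lambda>x. ennreal (\<rho>s n x)))
              \<and> (\<forall>x. (\<lambda>n. \<rho>s n x) \<longlonglongrightarrow> \<rho> x))"
proof -
  interpret L: ladder M W using assms by (rule ladder.intro)
  interpret C: chain "\<lambda>n. distr M borel (Delta W n)" "exponential_density 1" by (rule L.is_chain)
  let ?P = "density lborel (\<lambda>x. ennreal (C.ri x))"
  have dist: "distributed M lborel (Delta W n) (\<lambda>x. ennreal (C.rs n x))" for n
  proof -
    have "distr M lborel (Delta W n) = distr M borel (Delta W n)" by (rule distr_cong) auto
    then show ?thesis unfolding distributed_def using C.mu_rs[of n] L.Delta_meas[of n] by simp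
  qed
  show ?thesis
  proof (intro exI conjI allI impI)
    show "ladder_stationary ?P" by (rule C.pi_stationary)
    show "\<pi>' = ?P" if "ladder_stationary \<pi>'" for \<pi>' using stat_unique[OF that C.pi_stationary] .
    show "?P \<noteq> return borel c" for c by (rule dens_not_return[OF C.ri_meas])
    show "weak_conv_m (\<lambda>n. distr M borel (Delta W n)) ?P" by (rule C.weak)
    show "C.ri \<in> borel_measurable borel" by (rule C.ri_meas)
    show "0 \<le> C.ri x" for x by (rule C.ri_nonneg)
    show "0 \<le> C.rs n x" for n x by (rule C.rs_nonneg)
    show "distributed M lborel (Delta W n) (\<lambda>x. ennreal (C.rs n x))" for n by (rule dist)
    show "(\<lambda>n. C.rs n x) \<longlonglongrightarrow> C.ri x" for x by (rule C.rs_lim)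
  qed simp
qed



end
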